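(* Let $X$ be a regular Hausdorff locally countably compact topological space. (1) If $X$ is symmetrizable, then $X\times Y$ is symmetrizable for every symmetrizable topological space $Y$. (2) If $X$ has a weak base $(\mathcal{B}_x)_{x\in X}$ with every $\mathcal{B}_x$ countable (countable $\mathrm{S}_0$-character), then $X\times Y$ has countable $\mathrm{S}_0$-character for every topological space $Y$ of countable $\mathrm{S}_0$-character.
   Context: Products are with the product topology. Locally countably compact: every point has a neighborhood $K$ that is countably compact (every countably based filter whose members all meet $K$ has a refining ultrafilter converging to a point of $K$). A semi-metric on a set $Z$ is $d:Z\times Z\to[0,\infty)$ symmetric with $d(x,y)=0\iff x=y$, with balls $B(x,\epsilon)=\{y:d(x,y)<\epsilon\}$; a topological space $Z$ is symmetrizable if for some semi-metric $d$, $O\subset Z$ is open iff for every $x\in O$ there is $\epsilon>0$ with $B(x,\epsilon)\subset O$. A weak base of a topological space $Z$ is a family $(\mathcal{B}_x)_{x\in Z}$ where each $\mathcal{B}_x$ is a filter-base with $x\in\bigcap\mathcal{B}_x$ such that $U$ is open iff for every $x\in U$ there is $V\in\mathcal{B}_x$ with $V\subset U$; $Z$ has countable $\mathrm{S}_0$-character (weakly first-countable) if it has a weak base with each $\mathcal{B}_x$ countable. *)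

theory Defs
  imports "HOL-Analysis.Analysis"
begin

definition is_ultrafilter :: "'a filter \<Rightarrow> bool" where
  "is_ultrafilter U \<longleftrightarrow> U \<noteq> bot \<and> (\<forall>G. G \<noteq> bot \<and> G \<le> U \<longrightarrow> G = U)"

definition countably_based_filter :: "'a filter \<Rightarrow> bool" where
  "countably_based_filter F \<longleftrightarrow> (\<exists>B :: nat \<Rightarrow> 'a set. F = (INF n. principal (B n)))"

text \<open>Countable compactness of a subset K of a topological space, in the filter form of the paper.
  Note: in Isabelle's order, U \<le> F means U is finer than (refines) F.\<close>
definition countably_compact_in :: "'a topology \<Rightarrow> 'a set \<Rightarrow> bool" where
  "countably_compact_in X K \<longleftrightarrow> K \<subseteq> topspace X \<and>
     (\<forall>F. countably_based_filter F \<and> (\<forall>P. eventually P F \<longrightarrow> (\<exists>x\<in>K. P x)) \<longrightarrow>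
        (\<exists>U x. is_ultrafilter U \<and> U \<le> F \<and> x \<in> K \<and> limitin X id x U))"

definition locally_countably_compact :: "'a topology \<Rightarrow> bool" where
  "locally_countably_compact X \<longleftrightarrow>
     (\<forall>x\<in>topspace X. \<exists>K. countably_compact_in X K \<and>
        (\<exists>V. openin X V \<and> x \<in> V \<and> V \<subseteq> K))"

definition semimetric_on :: "'a set \<Rightarrow> ('a \<Rightarrow> 'a \<Rightarrow> real) \<Rightarrow> bool" where
  "semimetric_on Z d \<longleftrightarrow> (\<forall>x\<in>Z. \<forall>y\<in>Z. d x y \<ge> 0 \<and> d x y = d y x \<and> (d x y = 0 \<longleftrightarrow> x = y))"

definition symmetrizable :: "'a topology \<Rightarrow> bool" where
  "symmetrizable X \<longleftrightarrow> (\<exists>d. semimetric_on (topspace X) d \<and>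
     (\<forall>W. W \<subseteq> topspace X \<longrightarrow>
        (openin X W \<longleftrightarrow> (\<forall>x\<in>W. \<exists>e>0. {y \<in> topspace X. d x y < e} \<subseteq> W))))"

definition weak_base :: "'a topology \<Rightarrow> ('a \<Rightarrow> 'a set set) \<Rightarrow> bool" where
  "weak_base X B \<longleftrightarrow>
     (\<forall>x\<in>topspace X. B x \<noteq> {} \<and> (\<forall>V\<in>B x. V \<subseteq> topspace X \<and> x \<in> V) \<and>
        (\<forall>V1\<in>B x. \<forall>V2\<in>B x. \<exists>V3\<in>B x. V3 \<subseteq> V1 \<inter> V2)) \<and>
     (\<forall>U. U \<subseteq> topspace X \<longrightarrow> (openin X U \<longleftrightarrow> (\<forall>x\<in>U. \<exists>V\<in>B x. V \<subseteq> U)))"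

definition countable_S0_character :: "'a topology \<Rightarrow> bool" where
  "countable_S0_character X \<longleftrightarrow> (\<exists>B. weak_base X B \<and> (\<forall>x\<in>topspace X. countable (B x)))"

end

theory Submission
  imports Defs
begin

lemma cc_cover:
  fixes H :: "nat \<Rightarrow> 'a set"
  assumes cc: "countably_compact_in X K"
    and op: "\<And>m. openin X (H m)" and mono: "\<And>m m'. m \<le> m' \<Longrightarrow> H m \<subseteq> H m'"
    and cov: "K \<subseteq> (\<Union>m. H m)"
  shows "\<exists>m. K \<subseteq> H m"
proof (rule ccontr)
  assume "\<nexists>m. K \<subseteq> H m"
  then have ne: "\<forall>m. \<exists>z\<in>K. z \<notin> H m" by blast
  define F where "F = (INF m. principal (K - H m))"
  have cb: "countably_based_filter F" unfolding F_def countably_based_filter_def by (intro exI[of _ "\<lambda>m. K - H m"]) (rule refl)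
  have dir: "\<exists>x\<in>UNIV. principal (K - H x) \<le> inf (principal (K - H a)) (principal (K - H b))"
    if "a \<in> UNIV" "b \<in> UNIV" for a b :: nat
  proof -
    have "K - H (max a b) \<subseteq> K - H a" "K - H (max a b) \<subseteq> K - H b"
      using mono[of a "max a b"] mono[of b "max a b"] by auto
    then have "principal (K - H (max a b)) \<le> inf (principal (K - H a)) (principal (K - H b))"
      by (simp only: le_inf_iff principal_le_iff) 
    then show ?thesis by blast
  qed
  have ev: "eventually P F \<longleftrightarrow> (\<exists>m. eventually P (principal (K - H m)))" for P
  proof -
    have "eventually P F \<longleftrightarrow> (\<exists>m\<in>UNIV. eventually P (principal (K - H m)))"
      unfolding F_def by (rule eventually_INF_base[OF _ dir]) simp
    then show ?thesis by simp
  qed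
  have evm: "eventually P F \<longleftrightarrow> (\<exists>m. \<forall>x\<in>K - H m. P x)" for P
    unfolding ev eventually_principal ..
  have meet: "\<forall>P. eventually P F \<longrightarrow> (\<exists>x\<in>K. P x)"
  proof (intro allI impI)
    fix P assume "eventually P F"
    then obtain m where "\<forall>x\<in>K - H m. P x" unfolding evm by blast
    moreover obtain z where "z \<in> K" "z \<notin> H m" using ne by blast
    ultimately show "\<exists>x\<in>K. P x" by blast
  qed
  have cc2: "\<forall>F. countably_based_filter F \<and> (\<forall>P. eventually P F \<longrightarrow> (\<exists>x\<in>K. P x)) \<longrightarrow>
        (\<exists>U x. is_ultrafilter U \<and> U \<le> F \<and> x \<in> K \<and> limitin X id x U)"
    using cc unfolding countably_compact_in_def by (rule conjunct2)
  have "\<exists>U x. is_ultrafilter U \<and> U \<le> F \<and> x \<in> K \<and> limitin X id x U"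
    using cc2[rule_format, of F] cb meet by simp
  then obtain U x where U: "is_ultrafilter U" "U \<le> F" "x \<in> K" "limitin X id x U"
    by blast
  from U(3) cov obtain m where m: "x \<in> H m" by blast
  have e1: "eventually (\<lambda>z. z \<in> H m) U" using U(4) op[of m] m unfolding limitin_def by simp
  have "eventually (\<lambda>z. z \<in> K - H m) F" unfolding evm by blast
  then have e2: "eventually (\<lambda>z. z \<in> K - H m) U" using U(2) by (rule filter_leD[rotated])
  have "eventually (\<lambda>z. False) U" using eventually_conj[OF e1 e2] by (rule eventually_mono) blast
  then have "U = bot" by (simp only: eventually_False)
  with U(1) show False unfolding is_ultrafilter_def by simp
qed


lemma cc_cover_closed:
  fixes H :: "nat \<Rightarrow> 'a set"
  assumes cc: "countably_compact_in X K" and C: "closedin X C" "C \<subseteq> K"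
    and op: "\<And>m. openin X (H m)" and mono: "\<And>m m'. m \<le> m' \<Longrightarrow> H m \<subseteq> H m'"
    and cov: "C \<subseteq> (\<Union>m. H m)"
  shows "\<exists>m. C \<subseteq> H m"
proof -
  have Kt: "K \<subseteq> topspace X" using cc unfolding countably_compact_in_def by (rule conjunct1)
  have oc: "openin X (topspace X - C)" using C(1) by (rule openin_diff[OF openin_topspace])
  have "\<exists>m. K \<subseteq> H m \<union> (topspace X - C)"
  proof (rule cc_cover[OF cc])
    show "openin X (H m \<union> (topspace X - C))" for m using op[of m] oc by (rule openin_Un)
    show "H m \<union> (topspace X - C) \<subseteq> H m' \<union> (topspace X - C)" if "m \<le> m'" for m m'
      using mono[OF that] by blast
    show "K \<subseteq> (\<Union>m. H m \<union> (topspace X - C))"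
      using cov Kt by blast
  qed
  then show ?thesis using C(2) by blast
qed

lemma fin_max:
  fixes k :: nat and P :: "nat \<Rightarrow> nat \<Rightarrow> bool"
  assumes "\<And>n. n < k \<Longrightarrow> \<exists>j. P n j" and "\<And>n j j'. P n j \<Longrightarrow> j \<le> j' \<Longrightarrow> P n j'"
  shows "\<exists>N. \<forall>n<k. P n N"
  using assms(1)
proof (induction k)
  case 0 then show ?case by simp
next
  case (Suc k)
  then obtain N where N: "\<forall>n<k. P n N" by auto
  obtain j where j: "P k j" using Suc.prems by auto
  have "P n (max N j)" if "n < Suc k" for n
  proof (cases "n < k")
    case True show ?thesis by (rule assms(2)[OF N[rule_format, OF True] max.cobounded1])
  next
    case False then have "n = k" using that by simp
    then show ?thesis using assms(2)[OF j max.cobounded2] by simp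
  qed
  then show ?case by blast
qed


lemma key:
  fixes X :: "'a topology" and Y :: "'b topology" and BX :: "'a \<Rightarrow> nat \<Rightarrow> 'a set" and CY :: "'b \<Rightarrow> nat \<Rightarrow> 'b set"
  assumes reg: "regular_space X" and lcc: "locally_countably_compact X"
    and bx: "\<And>x n. x \<in> topspace X \<Longrightarrow> x \<in> BX x n \<and> BX x n \<subseteq> topspace X"
    and bxm: "\<And>x m n. x \<in> topspace X \<Longrightarrow> m \<le> n \<Longrightarrow> BX x n \<subseteq> BX x m"
    and bxo: "\<And>U. U \<subseteq> topspace X \<Longrightarrow> openin X U \<longleftrightarrow> (\<forall>x\<in>U. \<exists>n. BX x n \<subseteq> U)"
    and cy: "\<And>y n. y \<in> topspace Y \<Longrightarrow> y \<in> CY y n \<and> CY y n \<subseteq> topspace Y"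
    and cym: "\<And>y m n. y \<in> topspace Y \<Longrightarrow> m \<le> n \<Longrightarrow> CY y n \<subseteq> CY y m"
    and cyo: "\<And>U. U \<subseteq> topspace Y \<Longrightarrow> openin Y U \<longleftrightarrow> (\<forall>y\<in>U. \<exists>n. CY y n \<subseteq> U)"
    and W: "W \<subseteq> topspace X \<times> topspace Y"
  shows "openin (prod_topology X Y) W \<longleftrightarrow> (\<forall>p\<in>W. \<exists>n. BX (fst p) n \<times> CY (snd p) n \<subseteq> W)"
proof
  assume "openin (prod_topology X Y) W"
  then show "\<forall>p\<in>W. \<exists>n. BX (fst p) n \<times> CY (snd p) n \<subseteq> W"
  proof (intro ballI)
    fix p assume p: "p \<in> W"
    obtain x y where xy: "p = (x,y)" by (cases p)
    have pW: "(x,y) \<in> W" using p xy by simp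
    have "\<exists>U V. openin X U \<and> openin Y V \<and> x \<in> U \<and> y \<in> V \<and> U \<times> V \<subseteq> W"
      using openin_prod_topology_alt[THEN iffD1, rule_format, OF \<open>openin (prod_topology X Y) W\<close> pW] .
    then obtain U V where
      UV: "openin X U" "openin Y V" "x \<in> U" "y \<in> V" "U \<times> V \<subseteq> W" by blast
    obtain n1 where n1: "BX x n1 \<subseteq> U"
      using bxo[OF openin_subset[OF UV(1)], THEN iffD1, rule_format, OF UV(1) UV(3)] by blast
    obtain n2 where n2: "CY y n2 \<subseteq> V"
      using cyo[OF openin_subset[OF UV(2)], THEN iffD1, rule_format, OF UV(2) UV(4)] by blast
    have x: "x \<in> topspace X" using openin_subset[OF UV(1)] UV(3) by blast
    have y: "y \<in> topspace Y" using openin_subset[OF UV(2)] UV(4) by blast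
    have a: "BX x (max n1 n2) \<subseteq> U" using bxm[OF x max.cobounded1] n1 by (rule order_trans)
    have b: "CY y (max n1 n2) \<subseteq> V" using cym[OF y max.cobounded2] n2 by (rule order_trans)
    have "BX x (max n1 n2) \<times> CY y (max n1 n2) \<subseteq> W" using Sigma_mono[OF a b] UV(5) by (rule order_trans)
    then show "\<exists>n. BX (fst p) n \<times> CY (snd p) n \<subseteq> W" unfolding xy fst_conv snd_conv by blast
  qed
next
  assume wk: "\<forall>p\<in>W. \<exists>n. BX (fst p) n \<times> CY (snd p) n \<subseteq> W"
  define S where "S y = {x \<in> topspace X. (x,y) \<in> W}" for y
  have Sopen: "openin X (S y)" if y: "y \<in> topspace Y" for y
  proof -
    have "\<exists>n. BX x n \<subseteq> S y" if "x \<in> S y" for x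
    proof -
      from that wk obtain n where n: "BX x n \<times> CY y n \<subseteq> W" unfolding S_def by fastforce
      have "x \<in> topspace X" using that S_def by auto
      then show ?thesis using n cy[OF y, of n] bx[of x n] unfolding S_def by blast
    qed
    then show ?thesis by (subst bxo) (auto simp: S_def)
  qed
  show "openin (prod_topology X Y) W"
  proof (subst openin_subopen, intro ballI)
    fix p assume p: "p \<in> W"
    obtain x0 y0 where xy: "p = (x0,y0)" by fastforce
    have x0: "x0 \<in> topspace X" and y0: "y0 \<in> topspace Y" using p xy W by auto
    obtain K0 V0 where K0: "countably_compact_in X K0" "openin X V0" "x0 \<in> V0" "V0 \<subseteq> K0"
      using lcc x0 unfolding locally_countably_compact_def by blast
    have "x0 \<in> S y0" using p xy x0 by (auto simp: S_def)
    then have o1: "openin X (V0 \<inter> S y0)" and o2: "x0 \<in> V0 \<inter> S y0" using Sopen[OF y0] K0 by auto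
    have nb: "neighbourhood_base_of (closedin X) X" using reg neighbourhood_base_of_closedin by blast
    have "\<exists>U V. openin X U \<and> closedin X V \<and> x0 \<in> U \<and> U \<subseteq> V \<and> V \<subseteq> V0 \<inter> S y0"
      using nb[unfolded neighbourhood_base_of, rule_format, OF conjI[OF o1 o2]] .
    then obtain V C where VC: "openin X V" "closedin X C" "x0 \<in> V" "V \<subseteq> C" "C \<subseteq> V0 \<inter> S y0"
      by blast
    define G where "G = {y \<in> topspace Y. C \<subseteq> S y}"
    have y0G: "y0 \<in> G" using VC y0 by (auto simp: G_def)
    have VG: "V \<times> G \<subseteq> W" using VC by (auto simp: G_def S_def)
    have Gopen: "openin Y G"
    proof (subst cyo, simp add: G_def, intro ballI)
      fix y assume yG: "y \<in> G"
      then have y: "y \<in> topspace Y" and CSy: "C \<subseteq> S y" by (auto simp: G_def)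
      show "\<exists>n. CY y n \<subseteq> G"
      proof (rule ccontr)
        assume "\<nexists>n. CY y n \<subseteq> G"
        have Ct: "C \<subseteq> topspace X" using VC(2) by (rule closedin_subset)
        have "\<exists>y'. y' \<in> CY y n \<and> (\<exists>x\<in>C. (x,y') \<notin> W)" for n
        proof -
          obtain y' where y': "y' \<in> CY y n" "y' \<notin> G" using \<open>\<nexists>n. CY y n \<subseteq> G\<close> by blast
          have "y' \<in> topspace Y" using y'(1) cy[OF y, of n] by blast
          then have "\<not> C \<subseteq> S y'" using y'(2) unfolding G_def by blast
          then obtain x where "x \<in> C" "x \<notin> S y'" by blast
          then have "(x,y') \<notin> W" using Ct unfolding S_def by blast
          then show ?thesis using y'(1) \<open>x \<in> C\<close> by blast
        qed
        then have "\<forall>n. \<exists>y'. y' \<in> CY y n \<and> (\<exists>x\<in>C. (x,y') \<notin> W)" by blast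
        then obtain yn xn where yn: "\<And>n. yn n \<in> CY y n" and xn: "\<And>n. xn n \<in> C"
          and nW: "\<And>n. (xn n, yn n) \<notin> W" by metis
        have ynt: "yn n \<in> topspace Y" for n using yn cy[OF y] by blast
        define H where "H m = {x \<in> topspace X. (x,y) \<in> W \<and> (\<forall>n\<ge>m. (x, yn n) \<in> W)}" for m
        have Hmono: "H m \<subseteq> H m'" if "m \<le> m'" for m m' using that by (auto simp: H_def)
        have Hopen: "openin X (H m)" for m
        proof -
          have Ht: "H m \<subseteq> topspace X" by (auto simp: H_def)
          have "\<forall>x\<in>H m. \<exists>n. BX x n \<subseteq> H m"
          proof
          fix x assume xH: "x \<in> H m"
          then have x: "x \<in> topspace X" and xyW: "(x,y) \<in> W" and xn': "\<forall>n\<ge>m. (x, yn n) \<in> W"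
            by (auto simp: H_def)
          obtain k where k: "BX x k \<times> CY y k \<subseteq> W" using wk xyW by fastforce
          have "\<exists>N. \<forall>n<k. m \<le> n \<longrightarrow> BX x N \<subseteq> S (yn n)"
          proof (rule fin_max)
            fix n assume "n < k"
            show "\<exists>j. m \<le> n \<longrightarrow> BX x j \<subseteq> S (yn n)"
            proof (cases "m \<le> n")
              case True
              then have "x \<in> S (yn n)" using xn' x by (auto simp: S_def)
              then show ?thesis using Sopen[OF ynt, of n] bxo[of "S (yn n)"] openin_subset by blast
            qed simp
          next
            fix n j j' assume "m \<le> n \<longrightarrow> BX x j \<subseteq> S (yn n)" "j \<le> j'"
            then show "m \<le> n \<longrightarrow> BX x j' \<subseteq> S (yn n)" using bxm[OF x] by blast
          qed
          then obtain N where N: "\<And>n. n < k \<Longrightarrow> m \<le> n \<Longrightarrow> BX x N \<subseteq> S (yn n)" by blast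
          have "BX x (max k N) \<subseteq> H m"
          proof
            fix z assume z: "z \<in> BX x (max k N)"
            have zk: "z \<in> BX x k" using bxm[OF x max.cobounded1] z by blast
            have zN: "z \<in> BX x N" using bxm[OF x max.cobounded2] z by blast
            have zt: "z \<in> topspace X" using zk bx[OF x] by blast
            have "(z,y) \<in> W" using k zk cy[OF y] by blast
            moreover have "(z, yn n) \<in> W" if "m \<le> n" for n
            proof (cases "n < k")
              case True then show ?thesis using N[OF True that] zN by (auto simp: S_def)
            next
              case False
              then have "yn n \<in> CY y k" using yn[of n] cym[OF y, of k n] by auto
              then show ?thesis using k zk by blast
            qed
            ultimately show "z \<in> H m" using zt by (auto simp: H_def)
          qed
          then show "\<exists>n. BX x n \<subseteq> H m" by blast
          qed
          then show ?thesis using bxo[OF Ht] by blast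
        qed
        have Hcov: "C \<subseteq> (\<Union>m. H m)"
        proof
          fix x assume "x \<in> C"
          then have xS: "x \<in> S y" using CSy by blast
          then have x: "x \<in> topspace X" and xyW: "(x,y) \<in> W" by (auto simp: S_def)
          obtain k where k: "BX x k \<times> CY y k \<subseteq> W" using wk xyW by fastforce
          have "(x, yn n) \<in> W" if "k \<le> n" for n
            using k bx[OF x, of k] yn[of n] cym[OF y that] by blast
          then have "x \<in> H k" using x xyW by (auto simp: H_def)
          then show "x \<in> (\<Union>m. H m)" by blast
        qed
        obtain m where "C \<subseteq> H m"
          using cc_cover_closed[OF K0(1) VC(2) _ Hopen Hmono Hcov] VC(5) K0(4) by blast
        then have "(xn m, yn m) \<in> W" using xn[of m] by (auto simp: H_def)
        then show False using nW by blast
      qed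
    qed
    show "\<exists>T. openin (prod_topology X Y) T \<and> p \<in> T \<and> T \<subseteq> W"
      by (rule exI[of _ "V \<times> G"]) (use VC Gopen y0G VG xy in \<open>auto simp: openin_prod_Times_iff\<close>)
  qed
qed


lemma dec_seq:
  assumes "B \<noteq> {}" "countable B" "\<forall>V1\<in>B. \<forall>V2\<in>B. \<exists>V3\<in>B. V3 \<subseteq> V1 \<inter> V2"
  shows "\<exists>s::nat\<Rightarrow>'a set. (\<forall>n. s n \<in> B) \<and> (\<forall>m n. m \<le> n \<longrightarrow> s n \<subseteq> s m) \<and> (\<forall>V\<in>B. \<exists>n. s n \<subseteq> V)"
proof -
  define f where "f = from_nat_into B"
  have fB: "f n \<in> B" for n unfolding f_def using assms(1) by (rule from_nat_into)
  have fs: "\<exists>n. f n = V" if "V \<in> B" for V unfolding f_def using assms(2) that by (rule from_nat_into_surj)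
  define s where "s = rec_nat (f 0) (\<lambda>n S. SOME V. V \<in> B \<and> V \<subseteq> S \<inter> f (Suc n))"
  have s0: "s 0 = f 0" by (simp add: s_def)
  have sS: "s (Suc n) = (SOME V. V \<in> B \<and> V \<subseteq> s n \<inter> f (Suc n))" for n by (simp add: s_def)
  have sB: "s n \<in> B" for n
  proof (induction n)
    case 0 then show ?case using s0 fB by simp
  next
    case (Suc n)
    then have "\<exists>V. V \<in> B \<and> V \<subseteq> s n \<inter> f (Suc n)" using assms(3) fB by blast
    then have "s (Suc n) \<in> B \<and> s (Suc n) \<subseteq> s n \<inter> f (Suc n)" unfolding sS by (rule someI_ex)
    then show ?case by (rule conjunct1)
  qed
  have sSub: "s (Suc n) \<subseteq> s n \<inter> f (Suc n)" for n
  proof -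
    have "\<exists>V. V \<in> B \<and> V \<subseteq> s n \<inter> f (Suc n)" using assms(3) fB sB by blast
    then have "s (Suc n) \<in> B \<and> s (Suc n) \<subseteq> s n \<inter> f (Suc n)" unfolding sS by (rule someI_ex)
    then show ?thesis by (rule conjunct2)
  qed
  have dec: "s (Suc n) \<le> s n" for n using sSub[of n] by blast
  have P2: "\<forall>m n. m \<le> n \<longrightarrow> s n \<subseteq> s m"
    using lift_Suc_antimono_le[of s, OF dec] by blast
  have sf: "s n \<subseteq> f n" for n
  proof (cases n)
    case 0 then show ?thesis using s0 by simp
  next
    case (Suc k) then show ?thesis using sSub[of k] by blast
  qed
  have P3: "\<forall>V\<in>B. \<exists>n. s n \<subseteq> V"
  proof
    fix V assume "V \<in> B"
    then obtain n where "f n = V" using fs by blast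
    then show "\<exists>n. s n \<subseteq> V" using sf by blast
  qed
  show ?thesis using sB P2 P3 by blast
qed

lemma wb_seq:
  assumes "weak_base X B" "\<forall>x\<in>topspace X. countable (B x)"
  shows "\<exists>BX::'a \<Rightarrow> nat \<Rightarrow> 'a set. (\<forall>x n. x\<in>topspace X \<longrightarrow> x \<in> BX x n \<and> BX x n \<subseteq> topspace X)
    \<and> (\<forall>x m n. x\<in>topspace X \<longrightarrow> m \<le> n \<longrightarrow> BX x n \<subseteq> BX x m)
    \<and> (\<forall>U. U \<subseteq> topspace X \<longrightarrow> (openin X U \<longleftrightarrow> (\<forall>x\<in>U. \<exists>n. BX x n \<subseteq> U)))"
proof -
  have wb1: "\<forall>x\<in>topspace X. B x \<noteq> {} \<and> (\<forall>V\<in>B x. V \<subseteq> topspace X \<and> x \<in> V) \<and>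
        (\<forall>V1\<in>B x. \<forall>V2\<in>B x. \<exists>V3\<in>B x. V3 \<subseteq> V1 \<inter> V2)"
    using assms(1) unfolding weak_base_def by (rule conjunct1)
  have wb2: "\<forall>U. U \<subseteq> topspace X \<longrightarrow> (openin X U \<longleftrightarrow> (\<forall>x\<in>U. \<exists>V\<in>B x. V \<subseteq> U))"
    using assms(1) unfolding weak_base_def by (rule conjunct2)
  have "\<forall>x\<in>topspace X. \<exists>s::nat\<Rightarrow>'a set. (\<forall>n. s n \<in> B x) \<and> (\<forall>m n. m \<le> n \<longrightarrow> s n \<subseteq> s m) \<and> (\<forall>V\<in>B x. \<exists>n. s n \<subseteq> V)"
  proof
    fix x assume x: "x \<in> topspace X"
    show "\<exists>s::nat\<Rightarrow>'a set. (\<forall>n. s n \<in> B x) \<and> (\<forall>m n. m \<le> n \<longrightarrow> s n \<subseteq> s m) \<and> (\<forall>V\<in>B x. \<exists>n. s n \<subseteq> V)"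
    proof -
      have h: "B x \<noteq> {} \<and> (\<forall>V\<in>B x. V \<subseteq> topspace X \<and> x \<in> V) \<and>
        (\<forall>V1\<in>B x. \<forall>V2\<in>B x. \<exists>V3\<in>B x. V3 \<subseteq> V1 \<inter> V2)" using wb1 x by (rule bspec)
      show ?thesis
        by (rule dec_seq[OF conjunct1[OF h] assms(2)[rule_format, OF x] conjunct2[OF conjunct2[OF h]]])
    qed
  qed
  from bchoice[OF this] obtain S :: "'a \<Rightarrow> nat \<Rightarrow> 'a set" where S0: "\<forall>x\<in>topspace X. (\<forall>n. S x n \<in> B x) \<and> (\<forall>m n. m \<le> n \<longrightarrow> S x n \<subseteq> S x m) \<and> (\<forall>V\<in>B x. \<exists>n. S x n \<subseteq> V)"
    by blast
  have SB: "S x n \<in> B x" if "x \<in> topspace X" for x n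
    using S0[rule_format, OF that] by (elim conjE) (rule spec)
  have Sm: "m \<le> n \<Longrightarrow> S x n \<subseteq> S x m" if "x \<in> topspace X" for x n m
    using S0[rule_format, OF that] by (elim conjE) (elim allE impE)
  have SV: "V \<in> B x \<Longrightarrow> \<exists>n. S x n \<subseteq> V" if "x \<in> topspace X" for x V
    using S0[rule_format, OF that] by (elim conjE) (rule bspec)
  have P1: "\<forall>x n. x\<in>topspace X \<longrightarrow> x \<in> S x n \<and> S x n \<subseteq> topspace X"
  proof (intro allI impI)
    fix x n assume x: "x \<in> topspace X"
    show "x \<in> S x n \<and> S x n \<subseteq> topspace X" using wb1[rule_format, OF x] SB[OF x, of n] by blast
  qed
  have P3: "\<forall>U. U \<subseteq> topspace X \<longrightarrow> (openin X U \<longleftrightarrow> (\<forall>x\<in>U. \<exists>n. S x n \<subseteq> U))"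
  proof (intro allI impI)
    fix U assume U: "U \<subseteq> topspace X"
    have eq: "(\<exists>V\<in>B x. V \<subseteq> U) \<longleftrightarrow> (\<exists>n. S x n \<subseteq> U)" if "x \<in> U" for x
    proof
      have x: "x \<in> topspace X" using U that by blast
      assume "\<exists>V\<in>B x. V \<subseteq> U"
      then obtain V where "V \<in> B x" "V \<subseteq> U" by blast
      then obtain n where "S x n \<subseteq> V" using SV[OF x] by blast
      then show "\<exists>n. S x n \<subseteq> U" using \<open>V \<subseteq> U\<close> by blast
    next
      have x: "x \<in> topspace X" using U that by blast
      assume "\<exists>n. S x n \<subseteq> U"
      then show "\<exists>V\<in>B x. V \<subseteq> U" using SB[OF x] by blast
    qed
    have "openin X U \<longleftrightarrow> (\<forall>x\<in>U. \<exists>V\<in>B x. V \<subseteq> U)" using wb2 U by blast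
    also have "\<dots> \<longleftrightarrow> (\<forall>x\<in>U. \<exists>n. S x n \<subseteq> U)" using eq by blast
    finally show "openin X U \<longleftrightarrow> (\<forall>x\<in>U. \<exists>n. S x n \<subseteq> U)" .
  qed
  have P2: "\<forall>x m n. x\<in>topspace X \<longrightarrow> m \<le> n \<longrightarrow> S x n \<subseteq> S x m" using Sm by blast
  show ?thesis by (intro exI[of _ S] conjI P1 P2 P3)
qed

lemma ball_seq:
  "(\<exists>e>0. {z\<in>T. d x z < e} \<subseteq> U) \<longleftrightarrow> (\<exists>n. {z\<in>T. d x z < 1 / real (Suc n)} \<subseteq> U)"
proof
  assume "\<exists>e>0. {z\<in>T. d x z < e} \<subseteq> U"
  then obtain e where e: "e > 0" "{z\<in>T. d x z < e} \<subseteq> U" by blast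
  obtain n where "inverse (real (Suc n)) < e" using reals_Archimedean[OF e(1)] by blast
  then have lt: "1 / real (Suc n) < e" by (simp add: inverse_eq_divide)
  have "{z\<in>T. d x z < 1 / real (Suc n)} \<subseteq> {z\<in>T. d x z < e}" using lt by auto
  then have "{z\<in>T. d x z < 1 / real (Suc n)} \<subseteq> U" using e(2) by (rule order_trans)
  then show "\<exists>n. {z\<in>T. d x z < 1 / real (Suc n)} \<subseteq> U" by blast
next
  assume "\<exists>n. {z\<in>T. d x z < 1 / real (Suc n)} \<subseteq> U"
  then show "\<exists>e>0. {z\<in>T. d x z < e} \<subseteq> U" by (meson of_nat_0_less_iff zero_less_Suc divide_pos_pos zero_less_one)
qed

lemma sym_seq:
  assumes "semimetric_on (topspace X) d"
    "\<forall>W. W \<subseteq> topspace X \<longrightarrow> (openin X W \<longleftrightarrow> (\<forall>x\<in>W. \<exists>e>0. {y \<in> topspace X. d x y < e} \<subseteq> W))"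
  shows "(\<forall>x n. x\<in>topspace X \<longrightarrow> x \<in> {y \<in> topspace X. d x y < 1 / real (Suc n)} \<and> {y \<in> topspace X. d x y < 1 / real (Suc n)} \<subseteq> topspace X)
    \<and> (\<forall>x m n. x\<in>topspace X \<longrightarrow> m \<le> n \<longrightarrow> {y \<in> topspace X. d x y < 1 / real (Suc n)} \<subseteq> {y \<in> topspace X. d x y < 1 / real (Suc m)})
    \<and> (\<forall>U. U \<subseteq> topspace X \<longrightarrow> (openin X U \<longleftrightarrow> (\<forall>x\<in>U. \<exists>n. {y \<in> topspace X. d x y < 1 / real (Suc n)} \<subseteq> U)))"
proof (intro conjI allI impI)
  fix x n assume x: "x \<in> topspace X"
  have dX0: "d x x = 0" using assms(1) x unfolding semimetric_on_def by blast
  then show "x \<in> {y \<in> topspace X. d x y < 1 / real (Suc n)}" using x by simp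
next
  fix x n show "{y \<in> topspace X. d x y < 1 / real (Suc n)} \<subseteq> topspace X" by blast
next
  fix x and m n :: nat assume "m \<le> n"
  then have "1 / real (Suc n) \<le> 1 / real (Suc m)" by (simp add: frac_le)
  then show "{y \<in> topspace X. d x y < 1 / real (Suc n)} \<subseteq> {y \<in> topspace X. d x y < 1 / real (Suc m)}"
    by auto
next
  fix U assume U: "U \<subseteq> topspace X"
  have "openin X U \<longleftrightarrow> (\<forall>x\<in>U. \<exists>e>0. {y \<in> topspace X. d x y < e} \<subseteq> U)" using assms(2) U by blast
  also have "\<dots> \<longleftrightarrow> (\<forall>x\<in>U. \<exists>n. {y \<in> topspace X. d x y < 1 / real (Suc n)} \<subseteq> U)"
    by (simp only: ball_seq)
  finally show "openin X U \<longleftrightarrow> (\<forall>x\<in>U. \<exists>n. {y \<in> topspace X. d x y < 1 / real (Suc n)} \<subseteq> U)" .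
qed


lemma prod_semimetric:
  assumes "semimetric_on A dX" "semimetric_on B dY"
  shows "semimetric_on (A \<times> B) (\<lambda>p q. max (dX (fst p) (fst q)) (dY (snd p) (snd q)))"
  unfolding semimetric_on_def
proof (intro ballI)
  fix p q assume p: "p \<in> A \<times> B" and q: "q \<in> A \<times> B"
  obtain a b where ab: "p = (a,b)" by (cases p)
  obtain a' b' where ab': "q = (a',b')" by (cases q)
  have a: "a \<in> A" "a' \<in> A" and b: "b \<in> B" "b' \<in> B" using p q ab ab' by auto
  have 1: "dX a a' \<ge> 0 \<and> dX a a' = dX a' a \<and> (dX a a' = 0 \<longleftrightarrow> a = a')"
    using assms(1) a unfolding semimetric_on_def by blast
  have 2: "dY b b' \<ge> 0 \<and> dY b b' = dY b' b \<and> (dY b b' = 0 \<longleftrightarrow> b = b')"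
    using assms(2) b unfolding semimetric_on_def by blast
  show "0 \<le> max (dX (fst p) (fst q)) (dY (snd p) (snd q)) \<and>
         max (dX (fst p) (fst q)) (dY (snd p) (snd q)) = max (dX (fst q) (fst p)) (dY (snd q) (snd p)) \<and>
         (max (dX (fst p) (fst q)) (dY (snd p) (snd q)) = 0) = (p = q)"
    unfolding ab ab' fst_conv snd_conv prod.inject using 1 2 by (auto simp: max_def)
qed

theorem theorem6p1:
  fixes X :: "'a topology"
  assumes "regular_space X" and "Hausdorff_space X" and "locally_countably_compact X"
  shows "(symmetrizable X \<longrightarrow>
            (\<forall>Y :: 'b topology. symmetrizable Y \<longrightarrow> symmetrizable (prod_topology X Y)))
       \<and> (countable_S0_character X \<longrightarrow>
            (\<forall>Y :: 'c topology. countable_S0_character Y \<longrightarrow> countable_S0_character (prod_topology X Y)))"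
proof (intro conjI impI allI)
  fix Y :: "'b topology"
  assume sX: "symmetrizable X" and sY: "symmetrizable Y"
  obtain dX where dX: "semimetric_on (topspace X) dX"
    "\<forall>W. W \<subseteq> topspace X \<longrightarrow> (openin X W \<longleftrightarrow> (\<forall>x\<in>W. \<exists>e>0. {y \<in> topspace X. dX x y < e} \<subseteq> W))"
    using sX unfolding symmetrizable_def by blast
  obtain dY where dY: "semimetric_on (topspace Y) dY"
    "\<forall>W. W \<subseteq> topspace Y \<longrightarrow> (openin Y W \<longleftrightarrow> (\<forall>x\<in>W. \<exists>e>0. {y \<in> topspace Y. dY x y < e} \<subseteq> W))"
    using sY unfolding symmetrizable_def by blast
  define BX where "BX x n = {y \<in> topspace X. dX x y < 1 / real (Suc n)}" for x n
  define CY where "CY x n = {y \<in> topspace Y. dY x y < 1 / real (Suc n)}" for x n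
  note sx = sym_seq[OF dX, folded BX_def] and sy = sym_seq[OF dY, folded CY_def]
  define d where "d p q = max (dX (fst p) (fst q)) (dY (snd p) (snd q))" for p q
  have ball: "{q \<in> topspace (prod_topology X Y). d p q < e} = {y \<in> topspace X. dX (fst p) y < e} \<times> {y \<in> topspace Y. dY (snd p) y < e}" for p e
    unfolding d_def topspace_prod_topology by auto
  show "symmetrizable (prod_topology X Y)"
    unfolding symmetrizable_def
  proof (intro exI[of _ d] conjI allI impI)
    show "semimetric_on (topspace (prod_topology X Y)) d"
      unfolding d_def topspace_prod_topology by (rule prod_semimetric[OF dX(1) dY(1)])
  next
    fix W assume W: "W \<subseteq> topspace (prod_topology X Y)"
    have W': "W \<subseteq> topspace X \<times> topspace Y" using W by (simp only: topspace_prod_topology)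
    have "openin (prod_topology X Y) W \<longleftrightarrow> (\<forall>p\<in>W. \<exists>n. BX (fst p) n \<times> CY (snd p) n \<subseteq> W)"
      by (rule key[OF assms(1,3) conjunct1[OF sx, rule_format] conjunct1[OF conjunct2[OF sx], rule_format]
          conjunct2[OF conjunct2[OF sx], rule_format]
          conjunct1[OF sy, rule_format] conjunct1[OF conjunct2[OF sy], rule_format]
          conjunct2[OF conjunct2[OF sy], rule_format] W'])
    also have "\<dots> \<longleftrightarrow> (\<forall>p\<in>W. \<exists>n. {q \<in> topspace (prod_topology X Y). d p q < 1 / real (Suc n)} \<subseteq> W)"
      unfolding ball BX_def CY_def ..
    also have "\<dots> \<longleftrightarrow> (\<forall>p\<in>W. \<exists>e>0. {q \<in> topspace (prod_topology X Y). d p q < e} \<subseteq> W)"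
      by (simp only: ball_seq)
    finally show "openin (prod_topology X Y) W \<longleftrightarrow> (\<forall>p\<in>W. \<exists>e>0. {q \<in> topspace (prod_topology X Y). d p q < e} \<subseteq> W)" .
  qed
next
  fix Y :: "'c topology"
  assume cX: "countable_S0_character X" and cY: "countable_S0_character Y"
  obtain B1 where B1: "weak_base X B1" "\<forall>x\<in>topspace X. countable (B1 x)"
    using cX unfolding countable_S0_character_def by blast
  obtain B2 where B2: "weak_base Y B2" "\<forall>x\<in>topspace Y. countable (B2 x)"
    using cY unfolding countable_S0_character_def by blast
  obtain BX :: "'a \<Rightarrow> nat \<Rightarrow> 'a set" where bX: "\<forall>x n. x\<in>topspace X \<longrightarrow> x \<in> BX x n \<and> BX x n \<subseteq> topspace X"
    "\<forall>x m n. x\<in>topspace X \<longrightarrow> m \<le> n \<longrightarrow> BX x n \<subseteq> BX x m"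
    "\<forall>U. U \<subseteq> topspace X \<longrightarrow> (openin X U \<longleftrightarrow> (\<forall>x\<in>U. \<exists>n. BX x n \<subseteq> U))"
    using wb_seq[OF B1] by (elim exE conjE) (rule that)
  obtain CY :: "'c \<Rightarrow> nat \<Rightarrow> 'c set" where cy: "\<forall>x n. x\<in>topspace Y \<longrightarrow> x \<in> CY x n \<and> CY x n \<subseteq> topspace Y"
    "\<forall>x m n. x\<in>topspace Y \<longrightarrow> m \<le> n \<longrightarrow> CY x n \<subseteq> CY x m"
    "\<forall>U. U \<subseteq> topspace Y \<longrightarrow> (openin Y U \<longleftrightarrow> (\<forall>x\<in>U. \<exists>n. CY x n \<subseteq> U))"
    using wb_seq[OF B2] by (elim exE conjE) (rule that)
  define B where "B p = range (\<lambda>n. BX (fst p) n \<times> CY (snd p) n)" for p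
  have op: "openin (prod_topology X Y) W \<longleftrightarrow> (\<forall>p\<in>W. \<exists>n. BX (fst p) n \<times> CY (snd p) n \<subseteq> W)"
    if "W \<subseteq> topspace (prod_topology X Y)" for W
  proof -
    have W': "W \<subseteq> topspace X \<times> topspace Y" using that by (simp only: topspace_prod_topology)
    show ?thesis
      by (rule key[OF assms(1,3) bX(1)[rule_format] bX(2)[rule_format] bX(3)[rule_format]
          cy(1)[rule_format] cy(2)[rule_format] cy(3)[rule_format] W'])
  qed
  have "weak_base (prod_topology X Y) B"
    unfolding weak_base_def
  proof (intro conjI ballI allI impI)
    fix p assume p: "p \<in> topspace (prod_topology X Y)"
    then have p1: "fst p \<in> topspace X" and p2: "snd p \<in> topspace Y"
      by (auto simp only: topspace_prod_topology mem_Times_iff)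
    show "B p \<noteq> {}" by (simp add: B_def)
    show "p \<in> V" if VB: "V \<in> B p" for V
    proof -
      obtain n where "V = BX (fst p) n \<times> CY (snd p) n" using VB by (auto simp: B_def)
      then show ?thesis using bX(1)[rule_format, OF p1, of n] cy(1)[rule_format, OF p2, of n]
        by (simp add: mem_Times_iff)
    qed
    show "V \<subseteq> topspace (prod_topology X Y)" if VB: "V \<in> B p" for V
    proof -
      obtain n where "V = BX (fst p) n \<times> CY (snd p) n" using VB by (auto simp: B_def)
      then show ?thesis using bX(1)[rule_format, OF p1, of n] cy(1)[rule_format, OF p2, of n]
        unfolding topspace_prod_topology by blast
    qed
    fix V1 V2 assume "V1 \<in> B p" "V2 \<in> B p"
    then obtain n1 n2 where V: "V1 = BX (fst p) n1 \<times> CY (snd p) n1" "V2 = BX (fst p) n2 \<times> CY (snd p) n2"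
      by (auto simp: B_def)
    have a1: "BX (fst p) (max n1 n2) \<subseteq> BX (fst p) n1" using bX(2)[rule_format, OF p1 max.cobounded1] .
    have a2: "BX (fst p) (max n1 n2) \<subseteq> BX (fst p) n2" using bX(2)[rule_format, OF p1 max.cobounded2] .
    have b1: "CY (snd p) (max n1 n2) \<subseteq> CY (snd p) n1" using cy(2)[rule_format, OF p2 max.cobounded1] .
    have b2: "CY (snd p) (max n1 n2) \<subseteq> CY (snd p) n2" using cy(2)[rule_format, OF p2 max.cobounded2] .
    have "BX (fst p) (max n1 n2) \<times> CY (snd p) (max n1 n2) \<subseteq> V1 \<inter> V2"
      unfolding V using a1 a2 b1 b2 by blast
    moreover have "BX (fst p) (max n1 n2) \<times> CY (snd p) (max n1 n2) \<in> B p" by (simp add: B_def)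
    ultimately show "\<exists>V3\<in>B p. V3 \<subseteq> V1 \<inter> V2" by blast
  next
    fix U assume U: "U \<subseteq> topspace (prod_topology X Y)"
    have "(\<exists>n. BX (fst x) n \<times> CY (snd x) n \<subseteq> U) \<longleftrightarrow> (\<exists>V\<in>B x. V \<subseteq> U)" for x
      by (auto simp: B_def)
    then show "openin (prod_topology X Y) U \<longleftrightarrow> (\<forall>x\<in>U. \<exists>V\<in>B x. V \<subseteq> U)"
      using op[OF U] by simp
  qed
  moreover have "\<forall>p\<in>topspace (prod_topology X Y). countable (B p)" by (simp add: B_def)
  ultimately show "countable_S0_character (prod_topology X Y)"
    unfolding countable_S0_character_def by blast
qed


end
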